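(* Let $c>0$ and let $F:\mathbb{S}^3(c/4)\to T^1\mathbb{S}^2(c)$ be the map defined in the context. Then $F$ is a covering map with $F(-y)=F(y)$, and: (1) For $m=\log_2 c$ and any $r\ge 0$, $F$ induces an isometry from the real projective space $\mathbb{R}\mathrm{P}^3(c/4)=\mathbb{S}^3(c/4)/\{\pm 1\}$, with the metric of constant curvature $c/4$ induced from $\mathbb{S}^3(c/4)$, onto $T^1\mathbb{S}^2(c)$ equipped with the Riemannian metric obtained by restricting the generalized Cheeger–Gromoll metric $h_{m,r}$ of $T\mathbb{S}^2(c)$. Equivalently, $F^*(h_{m,r}|_{T^1\mathbb{S}^2(c)})$ is the round metric of $\mathbb{S}^3(c/4)$. (2) Take $c=4$, so that $\mathbb{S}^3(c/4)=\mathbb{S}^3$ and $F:\mathbb{S}^3\to T^1\mathbb{S}^2(4)$. Let $\epsilon>0$ and let $g_\epsilon$ be the Berger metric on $\mathbb{S}^3$, i.e. the Riemannian metric for which $\{X_1,X_2,\epsilon X_3\}$ is an orthonormal frame. Then for $m=\log_2(\epsilon^2)+2$ and any $r\ge0$, $F$ induces an isometry from $(\mathbb{R}\mathrm{P}^3,g_\epsilon)$ (the quotient of $(\mathbb{S}^3,g_\epsilon)$ by $\pm1$) onto $(T^1\mathbb{S}^2(4),h_{m,r}|_{T^1\mathbb{S}^2(4)})$.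
   Context: For $c>0$, $\mathbb{S}^n(c)=\{x\in\mathbb{R}^{n+1}:|x|=1/\sqrt c\}$ with the metric induced from Euclidean $\mathbb{R}^{n+1}$ (constant curvature $c$); $\mathbb{S}^n=\mathbb{S}^n(1)$. For $x=(x^1,x^2,x^3,x^4)\in\mathbb{R}^4$ write $z_1=x^1+\sqrt{-1}x^2$, $z_2=x^3+\sqrt{-1}x^4$. On $\mathbb{S}^3$ define the orthonormal vector fields - $X_1(x)=(-x^4,-x^3,x^2,x^1)$, - $X_2(x)=(-x^3,x^4,x^1,-x^2)$, - $X_3(x)=(-x^2,x^1,-x^4,x^3)$. For $x\in\mathbb{S}^3$ let $A_x=\begin{pmatrix}z_1&-\bar z_2\\ z_2&\bar z_1\end{pmatrix}\in\mathrm{SU}(2)$. Let $e_1=\begin{pmatrix}0&\sqrt{-1}\\ \sqrt{-1}&0\end{pmatrix}$, $e_2=\begin{pmatrix}0&-1\\1&0\end{pmatrix}$, $e_3=\begin{pmatrix}\sqrt{-1}&0\\0&-\sqrt{-1}\end{pmatrix}$. These form an orthonormal basis of $\mathfrak{su}(2)$ for $\langle X,Y\rangle=-\tfrac12\mathrm{Tr}(XY)$. Identify $\mathfrak{su}(2)$ with $\mathbb{R}^3$ via coordinates in this basis. Then $\rho(A_x)\in\mathrm{SO}(3)$ is the matrix of $Y\mapsto A_xYA_x^{-1}$, whose columns are the coordinate vectors of $A_xe_jA_x^{-1}$: - $A_xe_1A_x^{-1}=(\mathrm{Re}(z_1^2-\bar z_2^2),\ \mathrm{Im}(z_1^2-\bar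 z_2^2),\ -2\mathrm{Re}(z_1z_2))$, - $A_xe_2A_x^{-1}=(\mathrm{Im}(\bar z_1^2+z_2^2),\ \mathrm{Re}(\bar z_1^2+z_2^2),\ 2\mathrm{Im}(z_1z_2))$, - $A_xe_3A_x^{-1}=(2\mathrm{Re}(z_1\bar z_2),\ 2\mathrm{Im}(z_1\bar z_2),\ |z_1|^2-|z_2|^2)$. The unit tangent bundle is $T^1\mathbb{S}^2(c)=\{(p,v)\in\mathbb{R}^3\times\mathbb{R}^3: |p|=1/\sqrt c,\ |v|=1,\ \langle p,v\rangle=0\}$, with projection $\pi(p,v)=p$. The map $F:\mathbb{S}^3(c/4)\to T^1\mathbb{S}^2(c)$ is $$F(2x/\sqrt c)=\big(\tfrac1{\sqrt c}A_xe_3A_x^{-1},\ A_xe_1A_x^{-1}\big),\qquad x\in\mathbb{S}^3,$$ i.e. $F=\phi\circ\rho\circ\psi\circ\iota$ with $\iota(2x/\sqrt c)=x$, $\psi(x)=A_x$, and $\phi(c_1\,c_2\,c_3)=(c_3/\sqrt c,c_1)$. Lifts: $T\mathbb{S}^2(c)\subset\mathbb{R}^3\times\mathbb{R}^3$. For $(p,e)\in T\mathbb{S}^2(c)$ and $X\in T_p\mathbb{S}^2(c)$: - the vertical lift $X^v\in T_{(p,e)}T\mathbb{S}^2(c)$ is the velocity at $t=0$ of $t\mapsto(p,e+tX)$; - the horizontal lift $X^h$ is the velocity at $t=0$ of $t\mapsto(\gamma(t),V(t))$, where $\gamma$ is a curve in $\mathbb{S}^2(c)$ with $\gamma(0)=p$,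 $\dot\gamma(0)=X$, and $V$ is the Levi-Civita parallel field along $\gamma$ with $V(0)=e$. Every tangent vector of $T\mathbb{S}^2(c)$ at $(p,e)$ is uniquely $X^h+Y^v$, and $T_{(p,e)}T^1\mathbb{S}^2(c)=\{X^h+Y^v:\langle Y,e\rangle=0\}$. Generalized Cheeger–Gromoll metric: for $m\in\mathbb{R}$ and $r\ge0$, $h_{m,r}$ on $T\mathbb{S}^2(c)$ is given at $(p,e)$ by - $h_{m,r}(X^h,Y^h)=\langle X,Y\rangle$, - $h_{m,r}(X^h,Y^v)=0$, - $h_{m,r}(X^v,Y^v)=\omega^m(\langle X,Y\rangle+r\langle X,e\rangle\langle Y,e\rangle)$, where $\omega=1/(1+|e|^2)$. *)

theory Defs
  imports "HOL-Analysis.Analysis"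
begin

definition Sph :: "real \<Rightarrow> 'a::real_normed_vector set" where
  "Sph c = sphere 0 (1 / sqrt c)"

definition UT :: "real \<Rightarrow> ((real^3) \<times> (real^3)) set" where
  "UT c = {(p, v). norm p = 1 / sqrt c \<and> norm v = 1 \<and> inner p v = 0}"

(* columns of rho(A_x): coordinates of A_x e_j A_x^{-1} *)
definition col1 :: "real^4 \<Rightarrow> real^3" where
  "col1 x = (let z1 = Complex (x$1) (x$2); z2 = Complex (x$3) (x$4) in
     vector [Re (z1^2 - cnj z2^2), Im (z1^2 - cnj z2^2), - 2 * Re (z1 * z2)])"

definition col3 :: "real^4 \<Rightarrow> real^3" where
  "col3 x = (let z1 = Complex (x$1) (x$2); z2 = Complex (x$3) (x$4) in
     vector [2 * Re (z1 * cnj z2), 2 * Im (z1 * cnj z2), (cmod z1)^2 - (cmod z2)^2])"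

(* F(2x/sqrt c) = ((1/sqrt c) A_x e_3 A_x^{-1}, A_x e_1 A_x^{-1}); i.e. F y uses x = (sqrt c / 2) y.
   The formula defines F on all of R^4 (a polynomial extension), whose derivative restricted
   to tangent vectors is the differential of F. *)
definition Fmap :: "real \<Rightarrow> real^4 \<Rightarrow> (real^3) \<times> (real^3)" where
  "Fmap c y = (let x = (sqrt c / 2) *\<^sub>R y in ((1 / sqrt c) *\<^sub>R col3 x, col1 x))"

(* V is a Levi-Civita parallel field along the curve gamma in S^2(c):
   V is tangent to the sphere along gamma and the tangential part of V' vanishes
   (covariant derivative of the induced connection = tangential projection). *)
definition parallel_along :: "real \<Rightarrow> (real \<Rightarrow> real^3) \<Rightarrow> (real \<Rightarrow> real^3) \<Rightarrow> bool" where
  "parallel_along c \<gamma> V \<longleftrightarrow>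
     (\<forall>t. \<gamma> t \<in> Sph c \<and> \<gamma> differentiable (at t) \<and> inner (V t) (\<gamma> t) = 0 \<and>
          (\<exists>V'. (V has_vector_derivative V') (at t) \<and> (\<exists>l. V' = l *\<^sub>R \<gamma> t)))"

definition hlift :: "real \<Rightarrow> real^3 \<Rightarrow> real^3 \<Rightarrow> real^3 \<Rightarrow> (real^3) \<times> (real^3)" where
  "hlift c p e X = (THE Z. \<exists>\<gamma> V. \<gamma> 0 = p \<and> V 0 = e \<and> (\<gamma> has_vector_derivative X) (at 0) \<and>
       parallel_along c \<gamma> V \<and> ((\<lambda>t. (\<gamma> t, V t)) has_vector_derivative Z) (at 0))"

definition vlift :: "real^3 \<Rightarrow> real^3 \<Rightarrow> real^3 \<Rightarrow> (real^3) \<times> (real^3)" where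
  "vlift p e X = vector_derivative (\<lambda>t. (p, e + t *\<^sub>R X)) (at 0)"

definition hv_decomp :: "real \<Rightarrow> real^3 \<Rightarrow> real^3 \<Rightarrow> (real^3) \<times> (real^3) \<Rightarrow> (real^3) \<times> (real^3)" where
  "hv_decomp c p e Z = (THE XY. inner (fst XY) p = 0 \<and> inner (snd XY) p = 0 \<and>
       Z = hlift c p e (fst XY) + vlift p e (snd XY))"

definition hCG :: "real \<Rightarrow> real \<Rightarrow> real \<Rightarrow> (real^3) \<times> (real^3) \<Rightarrow>
                    (real^3) \<times> (real^3) \<Rightarrow> (real^3) \<times> (real^3) \<Rightarrow> real" where
  "hCG m r c pe Z1 Z2 =
     (let p = fst pe; e = snd pe;
          (X1, Y1) = hv_decomp c p e Z1; (X2, Y2) = hv_decomp c p e Z2;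
          \<omega> = 1 / (1 + (norm e)^2)
      in inner X1 X2 + \<omega> powr m * (inner Y1 Y2 + r * inner Y1 e * inner Y2 e))"

definition Xf1 :: "real^4 \<Rightarrow> real^4" where
  "Xf1 x = vector [- x$4, - x$3, x$2, x$1]"
definition Xf2 :: "real^4 \<Rightarrow> real^4" where
  "Xf2 x = vector [- x$3, x$4, x$1, - x$2]"
definition Xf3 :: "real^4 \<Rightarrow> real^4" where
  "Xf3 x = vector [- x$2, x$1, - x$4, x$3]"

(* Writing a tangent vector
   u = a1 X1 + a2 X2 + a3 (eps X3) (X1,X2,X3 Euclidean-orthonormal in T_x S^3),
   a1 = <u,X1>, a2 = <u,X2>, a3 = <u,X3>/eps, and g_eps(u,w) = sum a_i b_i. *)
definition berger :: "real \<Rightarrow> real^4 \<Rightarrow> real^4 \<Rightarrow> real^4 \<Rightarrow> real" where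
  "berger \<epsilon> x u w = inner u (Xf1 x) * inner w (Xf1 x) + inner u (Xf2 x) * inner w (Xf2 x)
      + (inner u (Xf3 x) / \<epsilon>) * (inner w (Xf3 x) / \<epsilon>)"

end

theory Submission imports Defs begin

lemma inner4: "inner (x::real^4) y = x$1*y$1 + x$2*y$2 + x$3*y$3 + x$4*y$4"
  by (simp add: inner_vec_def sum_4)
lemma inner3: "inner (x::real^3) y = x$1*y$1 + x$2*y$2 + x$3*y$3"
  by (simp add: inner_vec_def sum_3)

definition col2 :: "real^4 \<Rightarrow> real^3" where "col2 x = vector [2*(x$3*x$4 - x$1*x$2), x$1^2 - x$2^2 + x$3^2 - x$4^2, 2*(x$1*x$4+x$2*x$3)]"

lemma col1_c: "col1 x = vector [x$1^2 - x$2^2 - x$3^2 + x$4^2, 2*(x$1*x$2 + x$3*x$4), 2*(x$2*x$4 - x$1*x$3)]"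
  unfolding col1_def Let_def
  by (simp add: vec_eq_iff forall_3 power2_eq_square algebra_simps)
lemma col3_c: "col3 x = vector [2*(x$1*x$3 + x$2*x$4), 2*(x$2*x$3 - x$1*x$4), x$1^2 + x$2^2 - x$3^2 - x$4^2]"
  unfolding col3_def Let_def
  by (simp add: vec_eq_iff forall_3 power2_eq_square algebra_simps cmod_def)

lemma vector_4 [simp]:
 "(vector [x,y,z,w] ::('a::zero)^4)$1 = x"
 "(vector [x,y,z,w] ::('a::zero)^4)$2 = y"
 "(vector [x,y,z,w] ::('a::zero)^4)$3 = z"
 "(vector [x,y,z,w] ::('a::zero)^4)$4 = w"
  unfolding vector_def by simp_all

definition dcol1 :: "real^4 \<Rightarrow> real^4 \<Rightarrow> real^3" where
 "dcol1 x v = vector [2*(x$1* v$1 - x$2* v$2 - x$3* v$3 + x$4* v$4), 2*(x$1* v$2 + v$1*x$2 + x$3* v$4 + v$3*x$4),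
     2*(x$2* v$4 + v$2*x$4 - x$1* v$3 - v$1*x$3)]"
definition dcol3 :: "real^4 \<Rightarrow> real^4 \<Rightarrow> real^3" where
 "dcol3 x v = vector [2*(x$1* v$3 + v$1*x$3 + x$2* v$4 + v$2*x$4), 2*(x$2* v$3 + v$2*x$3 - x$1* v$4 - v$1*x$4),
     2*(x$1* v$1 + x$2* v$2 - x$3* v$3 - x$4* v$4)]"
definition Yx :: "real^4 \<Rightarrow> real^4 \<Rightarrow> real^3" where
 "Yx x v = dcol1 x v + inner (col1 x) (dcol3 x v) *\<^sub>R col3 x"

lemmas cdefs = col1_c col3_c dcol1_def dcol3_def col2_def Xf1_def Xf2_def Xf3_def inner3 inner4

lemma A1: "inner x (x::real^4) = 1 \<Longrightarrow> inner x v = 0 \<Longrightarrow> inner (dcol3 x v) (col3 x) = 0"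
  unfolding cdefs by simp algebra
lemma A2: "inner x (x::real^4) = 1 \<Longrightarrow> inner x v = 0 \<Longrightarrow> inner (dcol1 x v) (col3 x) + inner (col1 x) (dcol3 x v) = 0"
  unfolding cdefs by (simp add: algebra_simps power2_eq_square)
lemma A3: "inner x (x::real^4) = 1 \<Longrightarrow> inner x v = 0 \<Longrightarrow> inner (dcol1 x v) (col1 x) = 0"
  unfolding cdefs by simp algebra
lemma A4: "inner x (x::real^4) = 1 \<Longrightarrow> inner x v = 0 \<Longrightarrow> inner x w = 0 \<Longrightarrow>
   inner (dcol3 x v) (dcol3 x w) = 4 * (inner v (Xf1 x) * inner w (Xf1 x) + inner v (Xf2 x) * inner w (Xf2 x))"
  unfolding cdefs by simp algebra
lemma A5: "inner x (x::real^4) = 1 \<Longrightarrow> inner x v = 0 \<Longrightarrow> inner x w = 0 \<Longrightarrow>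
   inner (Yx x v) (Yx x w) = 4 * (inner v (Xf3 x) * inner w (Xf3 x))"
  unfolding Yx_def inner_add_left inner_add_right inner_scaleR_left inner_scaleR_right unfolding cdefs by simp algebra
lemma A6: "inner x (x::real^4) = 1 \<Longrightarrow> inner x v = 0 \<Longrightarrow> inner x w = 0 \<Longrightarrow>
   inner v w = inner v (Xf1 x) * inner w (Xf1 x) + inner v (Xf2 x) * inner w (Xf2 x) + inner v (Xf3 x) * inner w (Xf3 x)"
  unfolding cdefs by simp algebra
lemma A7: "inner (col1 x) (col3 x) = 0"
  unfolding cdefs by simp algebra
lemma A8: "inner x (x::real^4) = 1 \<Longrightarrow> inner (col1 x) (col1 x) = 1 \<and> inner (col3 x) (col3 x) = 1"
  unfolding cdefs by simp algebra
lemma vn_deriv: "((\<lambda>y. y $ i) has_derivative (\<lambda>v. v $ i)) F"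
  by (rule bounded_linear_imp_has_derivative) (rule bounded_linear_vec_nth)

lemma vec3_deriv:
  fixes f :: "'a::real_normed_vector \<Rightarrow> real^'n"
  assumes "\<And>k. ((\<lambda>y. f y $ k) has_derivative (\<lambda>v. f' v $ k)) (at x)"
  shows "(f has_derivative f') (at x)"
proof (subst has_derivative_componentwise_within, intro ballI)
  fix i :: "real^'n" assume "i \<in> Basis"
  then obtain k where k: "i = axis k 1" unfolding Basis_vec_def by auto
  have "((\<lambda>y. f y $ k * 1) has_derivative (\<lambda>v. f' v $ k * 1)) (at x)"
    using assms[of k] by simp
  then show "((\<lambda>y. f y \<bullet> i) has_derivative (\<lambda>v. f' v \<bullet> i)) (at x)"
    unfolding k inner_axis by simp
qed

lemma col1_deriv: "(col1 has_derivative dcol1 x) (at x)"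
proof (rule vec3_deriv)
  fix k :: 3
  have "k = 1 \<or> k = 2 \<or> k = 3" by (rule exhaust_3)
  then show "((\<lambda>y. col1 y $ k) has_derivative (\<lambda>v. dcol1 x v $ k)) (at x)"
    unfolding col1_c dcol1_def
    apply (elim disjE)
    subgoal by (simp, rule has_derivative_eq_rhs, (intro derivative_eq_intros), (rule vn_deriv refl)+, simp add: fun_eq_iff algebra_simps power2_eq_square)
    subgoal by (simp, rule has_derivative_eq_rhs, (intro derivative_eq_intros), (rule vn_deriv refl)+, simp add: fun_eq_iff algebra_simps power2_eq_square)
    subgoal by (simp, rule has_derivative_eq_rhs, (intro derivative_eq_intros), (rule vn_deriv refl)+, simp add: fun_eq_iff algebra_simps power2_eq_square)
    done
qed

lemma col3_deriv: "(col3 has_derivative dcol3 x) (at x)"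
proof (rule vec3_deriv)
  fix k :: 3
  have "k = 1 \<or> k = 2 \<or> k = 3" by (rule exhaust_3)
  then show "((\<lambda>y. col3 y $ k) has_derivative (\<lambda>v. dcol3 x v $ k)) (at x)"
    unfolding col3_c dcol3_def
    apply (elim disjE)
    subgoal by (simp, rule has_derivative_eq_rhs, (intro derivative_eq_intros), (rule vn_deriv refl)+, simp add: fun_eq_iff algebra_simps power2_eq_square)
    subgoal by (simp, rule has_derivative_eq_rhs, (intro derivative_eq_intros), (rule vn_deriv refl)+, simp add: fun_eq_iff algebra_simps power2_eq_square)
    subgoal by (simp, rule has_derivative_eq_rhs, (intro derivative_eq_intros), (rule vn_deriv refl)+, simp add: fun_eq_iff algebra_simps power2_eq_square)
    done
qed

lemma inner_self_norm2: "inner x x = (norm x)^2" for x :: "'a::real_inner"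
  by (simp add: power2_norm_eq_inner)

lemma hlift_unique:
  assumes c: "c > 0" and p: "norm p = 1/sqrt c"
    and g0: "\<gamma> 0 = p" and V0: "V 0 = e" and gd: "(\<gamma> has_vector_derivative X) (at 0)"
    and par: "parallel_along c \<gamma> V" and Zd: "((\<lambda>t. (\<gamma> t, V t)) has_vector_derivative Z) (at 0)"
  shows "Z = (X, (- c * inner e X) *\<^sub>R p)"
proof -
  from par obtain V' l where Vd: "(V has_vector_derivative V') (at 0)" and V'l: "V' = l *\<^sub>R \<gamma> 0"
    unfolding parallel_along_def by blast
  have orth: "\<And>t. inner (V t) (\<gamma> t) = 0" using par unfolding parallel_along_def by blast
  have "((\<lambda>t. (\<gamma> t, V t)) has_vector_derivative (X, V')) (at 0)"
    by (rule has_vector_derivative_Pair[OF gd Vd])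
  with Zd have Z: "Z = (X, V')" by (rule vector_derivative_unique_at)
  have d1: "((\<lambda>t. inner (V t) (\<gamma> t)) has_vector_derivative (inner (V 0) X + inner V' (\<gamma> 0))) (at 0)"
    by (rule bounded_bilinear.has_vector_derivative[OF bounded_bilinear_inner Vd gd])
  have d2: "((\<lambda>t. inner (V t) (\<gamma> t)) has_vector_derivative 0) (at 0)"
    using orth by simp
  have "inner (V 0) X + inner V' (\<gamma> 0) = 0"
    using vector_derivative_unique_at[OF d1 d2] .
  then have "inner e X + l * (norm p)^2 = 0"
    using V'l g0 V0 by (simp add: inner_self_norm2)
  moreover have "(norm p)^2 = 1/c" using p c by (simp add: power_divide)
  ultimately have "l = - c * inner e X" using c by (simp add: field_simps)
  then show ?thesis using Z V'l g0 by simp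
qed

lemma Sph_iff: "x \<in> Sph c \<longleftrightarrow> norm x = 1 / sqrt c"
  by (simp add: Sph_def)

lemma hlift_exists:
  fixes p e X :: "real^3"
  assumes c: "c > 0" and p: "norm p = 1/sqrt c" and Xp: "inner X p = 0" and ep: "inner e p = 0"
  shows "\<exists>\<gamma> V. \<gamma> 0 = p \<and> V 0 = e \<and> (\<gamma> has_vector_derivative X) (at 0) \<and>
       parallel_along c \<gamma> V \<and> ((\<lambda>t. (\<gamma> t, V t)) has_vector_derivative (X, (- c * inner e X) *\<^sub>R p)) (at 0)"
proof (cases "X = 0")
  case True
  have "parallel_along c (\<lambda>t. p) (\<lambda>t. e)"
    unfolding parallel_along_def using p ep by (auto simp: Sph_iff intro!: exI[of _ 0])
  moreover have "((\<lambda>t. (p, e)) has_vector_derivative ((0::real^3), (0::real^3))) (at 0)"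
    by (rule has_vector_derivative_Pair) simp_all
  ultimately show ?thesis using True
    by (rule_tac exI[of _ "\<lambda>t. p"], rule_tac exI[of _ "\<lambda>t. e"]) simp
next
  case False
  define k where "k = sqrt c * norm X"
  have k: "k > 0" using c False by (simp add: k_def)
  have pp: "inner p p = 1/c" using p c by (simp add: inner_self_norm2 power_divide)
  have XX: "inner X X = k^2 / c" using c by (simp add: k_def inner_self_norm2 power_mult_distrib)
  define \<beta> where "\<beta> = inner e X / (norm X)^2"
  define \<delta> where "\<delta> = sqrt c * inner e X / norm X"
  have bk: "\<beta> * k = \<delta>" using False by (simp add: \<beta>_def \<delta>_def k_def power2_eq_square field_simps)
  have dk: "\<delta> * k = c * inner e X" using False c by (simp add: \<delta>_def k_def field_simps)
  define Xk where "Xk = (1/k) *\<^sub>R X"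
  have XkX: "k *\<^sub>R Xk = X" using k by (simp add: Xk_def)
  define \<gamma> where "\<gamma> t = cos (k*t) *\<^sub>R p + sin (k*t) *\<^sub>R Xk" for t
  define V where "V t = e + (\<beta> * (cos (k*t) - 1)) *\<^sub>R X - (\<delta> * sin (k*t)) *\<^sub>R p" for t
  have gd: "(\<gamma> has_vector_derivative ((- k * sin (k*t)) *\<^sub>R p + cos (k*t) *\<^sub>R X)) (at t)" for t
    unfolding \<gamma>_def
    apply (rule has_vector_derivative_eq_rhs)
     apply (intro derivative_eq_intros)
     apply (rule refl)+
    using k by (simp add: algebra_simps flip: XkX)
  have Vd: "(V has_vector_derivative ((- \<delta> * k) *\<^sub>R \<gamma> t)) (at t)" for t
    unfolding V_def
    apply (rule has_vector_derivative_eq_rhs)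
     apply (intro derivative_eq_intros)
     apply (rule refl)+
    using k unfolding \<gamma>_def bk[symmetric] by (simp add: algebra_simps flip: XkX)
  have gS: "\<gamma> t \<in> Sph c" for t
  proof -
    have "inner (\<gamma> t) (\<gamma> t) = (cos (k*t))^2 * inner p p + (sin (k*t) / k)^2 * inner X X"
      unfolding \<gamma>_def Xk_def by (simp add: inner_add_left inner_add_right Xp inner_commute power2_eq_square)
    also have "\<dots> = (cos (k*t))^2 / c + (sin (k*t))^2 / c" unfolding pp XX using k
      by (simp add: power_divide)
    also have "\<dots> = 1/c" by (metis add_divide_distrib sin_cos_squared_add2)
    finally have "(norm (\<gamma> t))^2 = 1/c" by (simp add: inner_self_norm2)
    then have "norm (\<gamma> t) = sqrt (1/c)" by (metis norm_ge_zero real_sqrt_unique)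
    then show ?thesis by (simp add: Sph_iff real_sqrt_divide)
  qed
  have orth: "inner (V t) (\<gamma> t) = 0" for t
  proof -
    have "inner (V t) (\<gamma> t) = sin (k*t) / k * inner e X + \<beta> * (cos (k*t) - 1) * (sin (k*t)/k) * inner X X
          - \<delta> * sin (k*t) * cos (k*t) * inner p p"
      unfolding V_def \<gamma>_def Xk_def
      by (simp add: inner_add_left inner_add_right inner_diff_left Xp ep inner_commute algebra_simps)
    also have "\<dots> = 0"
      unfolding pp XX \<beta>_def \<delta>_def k_def using c False
      by (simp add: field_simps power2_eq_square)
    finally show ?thesis .
  qed
  have par: "parallel_along c \<gamma> V"
    unfolding parallel_along_def
    using gS orth Vd gd by (blast intro: differentiableI_vector)
  have "((\<lambda>t. (\<gamma> t, V t)) has_vector_derivative (X, (- c * inner e X) *\<^sub>R p)) (at 0)"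
  proof -
    have "((\<lambda>t. (\<gamma> t, V t)) has_vector_derivative ((- k * sin (k*0)) *\<^sub>R p + cos (k*0) *\<^sub>R X, (- \<delta> * k) *\<^sub>R \<gamma> 0)) (at 0)"
      by (rule has_vector_derivative_Pair[OF gd Vd])
    then show ?thesis using dk by (simp add: \<gamma>_def)
  qed
  moreover have "\<gamma> 0 = p" "V 0 = e" by (simp_all add: \<gamma>_def V_def)
  moreover have "(\<gamma> has_vector_derivative X) (at 0)" using gd[of 0] by simp
  ultimately show ?thesis using par by blast
qed

lemma hlift_eq:
  fixes p e X :: "real^3"
  assumes c: "c > 0" and p: "norm p = 1/sqrt c" and Xp: "inner X p = 0" and ep: "inner e p = 0"
  shows "hlift c p e X = (X, (- c * inner e X) *\<^sub>R p)"
  unfolding hlift_def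
proof (rule the_equality)
  show "\<exists>\<gamma> V. \<gamma> 0 = p \<and> V 0 = e \<and> (\<gamma> has_vector_derivative X) (at 0) \<and>
       parallel_along c \<gamma> V \<and> ((\<lambda>t. (\<gamma> t, V t)) has_vector_derivative (X, (- c * inner e X) *\<^sub>R p)) (at 0)"
    by (rule hlift_exists[OF assms])
next
  fix Z assume "\<exists>\<gamma> V. \<gamma> 0 = p \<and> V 0 = e \<and> (\<gamma> has_vector_derivative X) (at 0) \<and>
       parallel_along c \<gamma> V \<and> ((\<lambda>t. (\<gamma> t, V t)) has_vector_derivative Z) (at 0)"
  then show "Z = (X, (- c * inner e X) *\<^sub>R p)"
    using hlift_unique[OF c p] by blast
qed

lemma vlift_eq: "vlift p e Y = (0, Y)"
proof -
  have "((\<lambda>t. (p, e + t *\<^sub>R Y)) has_vector_derivative (0, Y)) (at 0)"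
    by (rule has_vector_derivative_Pair) (auto intro!: derivative_eq_intros)
  then show ?thesis unfolding vlift_def by (rule vector_derivative_at)
qed

lemma hv_decomp_eq:
  fixes p e Z1 Z2 :: "real^3"
  assumes c: "c > 0" and p: "norm p = 1/sqrt c" and ep: "inner e p = 0"
    and Z1p: "inner Z1 p = 0" and Z2p: "inner Z2 p + inner e Z1 = 0"
  shows "hv_decomp c p e (Z1, Z2) = (Z1, Z2 + (c * inner e Z1) *\<^sub>R p)"
  unfolding hv_decomp_def
proof (rule the_equality)
  have pp: "inner p p = 1/c" using p c by (simp add: inner_self_norm2 power_divide)
  show "inner (fst (Z1, Z2 + (c * inner e Z1) *\<^sub>R p)) p = 0 \<and>
    inner (snd (Z1, Z2 + (c * inner e Z1) *\<^sub>R p)) p = 0 \<and>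
    (Z1, Z2) = hlift c p e (fst (Z1, Z2 + (c * inner e Z1) *\<^sub>R p)) + vlift p e (snd (Z1, Z2 + (c * inner e Z1) *\<^sub>R p))"
    using Z1p Z2p pp c by (simp add: hlift_eq[OF c p Z1p ep] vlift_eq inner_add_left)
next
  fix XY :: "(real^3) \<times> (real^3)"
  assume a: "inner (fst XY) p = 0 \<and> inner (snd XY) p = 0 \<and> (Z1, Z2) = hlift c p e (fst XY) + vlift p e (snd XY)"
  then have "(Z1, Z2) = (fst XY, (- c * inner e (fst XY)) *\<^sub>R p + snd XY)"
    by (simp add: hlift_eq[OF c p _ ep] vlift_eq)
  then show "XY = (Z1, Z2 + (c * inner e Z1) *\<^sub>R p)"
    by (cases XY) auto
qed

lemma dcol1_scale: "dcol1 x (a *\<^sub>R v) = a *\<^sub>R dcol1 x v"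
  by (simp add: dcol1_def vec_eq_iff forall_3 algebra_simps)
lemma dcol3_scale: "dcol3 x (a *\<^sub>R v) = a *\<^sub>R dcol3 x v"
  by (simp add: dcol3_def vec_eq_iff forall_3 algebra_simps)

definition Fd :: "real \<Rightarrow> real^4 \<Rightarrow> real^4 \<Rightarrow> (real^3) \<times> (real^3)" where
  "Fd c y u = ((1 / sqrt c) *\<^sub>R dcol3 ((sqrt c / 2) *\<^sub>R y) ((sqrt c / 2) *\<^sub>R u),
               dcol1 ((sqrt c / 2) *\<^sub>R y) ((sqrt c / 2) *\<^sub>R u))"

lemma Fmap_deriv: "(Fmap c has_derivative Fd c y) (at y)"
proof -
  define s where "s = sqrt c / 2"
  have h1: "((\<lambda>y. s *\<^sub>R y) has_derivative (\<lambda>u. s *\<^sub>R u)) (at y)"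
    by (rule bounded_linear_imp_has_derivative) (simp add: bounded_linear_scaleR_right)
  have d1: "((\<lambda>y. col1 (s *\<^sub>R y)) has_derivative (\<lambda>u. dcol1 (s *\<^sub>R y) (s *\<^sub>R u))) (at y)"
    using has_derivative_compose[OF h1 col1_deriv] by (simp add: o_def)
  have d3: "((\<lambda>y. col3 (s *\<^sub>R y)) has_derivative (\<lambda>u. dcol3 (s *\<^sub>R y) (s *\<^sub>R u))) (at y)"
    using has_derivative_compose[OF h1 col3_deriv] by (simp add: o_def)
  have d3': "((\<lambda>y. (1 / sqrt c) *\<^sub>R col3 (s *\<^sub>R y)) has_derivative (\<lambda>u. (1 / sqrt c) *\<^sub>R dcol3 (s *\<^sub>R y) (s *\<^sub>R u))) (at y)"
    by (rule has_derivative_scaleR_right[OF d3])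
  have "((\<lambda>y. ((1 / sqrt c) *\<^sub>R col3 (s *\<^sub>R y), col1 (s *\<^sub>R y))) has_derivative
         (\<lambda>u. ((1 / sqrt c) *\<^sub>R dcol3 (s *\<^sub>R y) (s *\<^sub>R u), dcol1 (s *\<^sub>R y) (s *\<^sub>R u)))) (at y)"
    by (rule has_derivative_Pair[OF d3' d1])
  then show ?thesis unfolding Fmap_def Fd_def Let_def s_def .
qed

lemma norm_eq_1_inner: "norm (z::'a::real_inner) = 1 \<longleftrightarrow> inner z z = 1"
  by (metis norm_eq_sqrt_inner real_sqrt_eq_1_iff)

lemma sph_x:
  assumes c: "c > 0" and y: "y \<in> Sph (c/4)"
  shows "inner ((sqrt c / 2) *\<^sub>R y) ((sqrt c / 2) *\<^sub>R y) = (1::real)"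
proof -
  have "norm y = 2 / sqrt c" using y c by (simp add: Sph_iff real_sqrt_divide)
  then have "norm ((sqrt c / 2) *\<^sub>R y) = 1" using c by simp
  then show ?thesis using norm_eq_1_inner by blast
qed

lemma hCG_F:
  assumes c: "c > 0" and y: "y \<in> Sph (c/4)" and uy: "inner u y = 0" and wy: "inner w y = 0"
  defines "x \<equiv> (sqrt c / 2) *\<^sub>R y"
  shows "hCG m r c (Fmap c y) (Fd c y u) (Fd c y w) =
     (1/4) * inner (dcol3 x u) (dcol3 x w) + ((1/2) powr m * (c/4)) * inner (Yx x u) (Yx x w)"
proof -
  define s where "s = sqrt c / 2"
  have sc: "sqrt c > 0" using c by simp
  have s1: "s / sqrt c = 1/2" using sc by (simp add: s_def)
  have s0: "s \<noteq> 0" using sc by (simp add: s_def)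
  have s2: "c / 2 * (1 / sqrt c) = s" using c sc by (simp add: s_def field_simps)
  have xx: "inner x x = 1" unfolding x_def by (rule sph_x[OF c y])
  have xu: "inner x u = 0" and xw: "inner x w = 0" using uy wy by (simp_all add: x_def inner_commute)
  define p where "p = (1 / sqrt c) *\<^sub>R col3 x"
  define e where "e = col1 x"
  have F: "Fmap c y = (p, e)" by (simp add: Fmap_def p_def e_def x_def Let_def)
  have n3: "norm (col3 x) = 1" using A8[OF xx] by (simp add: norm_eq_1_inner)
  have pn: "norm p = 1 / sqrt c" using sc by (simp add: p_def n3)
  have ep: "inner e p = 0" by (simp add: e_def p_def A7)
  have ee: "inner e e = 1" using A8[OF xx] by (simp add: e_def)
  have Fd: "Fd c y v = ((1/2) *\<^sub>R dcol3 x v, s *\<^sub>R dcol1 x v)" for v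
  proof -
    have xs: "s *\<^sub>R y = x" by (simp add: x_def s_def)
    have "Fd c y v = ((1 / sqrt c) *\<^sub>R dcol3 x (s *\<^sub>R v), dcol1 x (s *\<^sub>R v))"
      unfolding Fd_def s_def[symmetric] xs ..
    also have "\<dots> = ((1/2) *\<^sub>R dcol3 x v, s *\<^sub>R dcol1 x v)"
      using s1 sc by (simp add: dcol1_scale dcol3_scale s_def)
    finally show ?thesis .
  qed
  have hv: "hv_decomp c p e (Fd c y v) = ((1/2) *\<^sub>R dcol3 x v, s *\<^sub>R Yx x v)" if xv: "inner x v = 0" for v
  proof -
    have Z1p: "inner ((1/2) *\<^sub>R dcol3 x v) p = 0" by (simp add: p_def A1[OF xx xv])
    have Z2p: "inner (s *\<^sub>R dcol1 x v) p + inner e ((1/2) *\<^sub>R dcol3 x v) = 0"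
    proof -
      have "inner (s *\<^sub>R dcol1 x v) p + inner e ((1/2) *\<^sub>R dcol3 x v)
          = (1/2) * (inner (dcol1 x v) (col3 x) + inner (col1 x) (dcol3 x v))"
        using s1 s0 by (simp add: p_def e_def algebra_simps)
      then show ?thesis by (simp add: A2[OF xx xv])
    qed
    have "hv_decomp c p e (Fd c y v) = ((1/2) *\<^sub>R dcol3 x v, s *\<^sub>R dcol1 x v + (c * inner e ((1/2) *\<^sub>R dcol3 x v)) *\<^sub>R p)"
      unfolding Fd by (rule hv_decomp_eq[OF c pn ep Z1p Z2p])
    also have "s *\<^sub>R dcol1 x v + (c * inner e ((1/2) *\<^sub>R dcol3 x v)) *\<^sub>R p = s *\<^sub>R Yx x v"
    proof -
      have "(c * inner e ((1/2) *\<^sub>R dcol3 x v)) *\<^sub>R p = (inner (col1 x) (dcol3 x v) * (c/2 * (1/sqrt c))) *\<^sub>R col3 x"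
        by (simp add: p_def e_def)
      also have "\<dots> = s *\<^sub>R (inner (col1 x) (dcol3 x v) *\<^sub>R col3 x)" unfolding s2 by simp
      finally show ?thesis by (simp add: Yx_def scaleR_add_right)
    qed
    finally show ?thesis .
  qed
  have Ye: "inner (Yx x v) e = 0" if xv: "inner x v = 0" for v
    using A3[OF xx xv] A7[of x] by (simp add: Yx_def e_def inner_add_left inner_add_right inner_commute)
  have om: "1 / (1 + (norm e)^2) = (1/2::real)" using ee by (simp add: inner_self_norm2)
  have ss: "s * s = c/4" using c by (simp add: s_def)
  show ?thesis
    unfolding hCG_def F
    using hv[OF xu] hv[OF xw] Ye[OF xu] Ye[OF xw] om ss
    by (simp add: Let_def)
qed

lemma half_powr: "(1/2::real) powr m = 1 / 2 powr m"
  by (simp add: powr_divide)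

lemma part1:
  assumes c: "c > 0" and y: "y \<in> Sph (c/4)"
  shows "\<exists>F'. (Fmap c has_derivative F') (at y) \<and>
          (\<forall>u w. inner u y = 0 \<longrightarrow> inner w y = 0 \<longrightarrow>
             hCG (log 2 c) r c (Fmap c y) (F' u) (F' w) = inner u w)"
proof (intro exI conjI allI impI)
  show "(Fmap c has_derivative Fd c y) (at y)" by (rule Fmap_deriv)
  fix u w :: "real^4" assume uy: "inner u y = 0" and wy: "inner w y = 0"
  define x where "x = (sqrt c / 2) *\<^sub>R y"
  have xx: "inner x x = 1" unfolding x_def by (rule sph_x[OF c y])
  have xu: "inner x u = 0" and xw: "inner x w = 0" using uy wy by (simp_all add: x_def inner_commute)
  have pw: "(1/2::real) powr (log 2 c) * (c/4) = 1/4" using c by (simp add: half_powr)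
  have "hCG (log 2 c) r c (Fmap c y) (Fd c y u) (Fd c y w) =
     (1/4) * inner (dcol3 x u) (dcol3 x w) + ((1/2) powr (log 2 c) * (c/4)) * inner (Yx x u) (Yx x w)"
    unfolding x_def by (rule hCG_F[OF c y uy wy])
  also have "\<dots> = inner u w"
    unfolding pw A4[OF xx xu xw] A5[OF xx xu xw] A6[OF xx xu xw] by simp
  finally show "hCG (log 2 c) r c (Fmap c y) (Fd c y u) (Fd c y w) = inner u w" .
qed

lemma part2:
  assumes e: "\<epsilon> > 0" and y: "y \<in> (Sph 1 :: (real^4) set)"
  shows "\<exists>F'. (Fmap 4 has_derivative F') (at y) \<and>
          (\<forall>u w. inner u y = 0 \<longrightarrow> inner w y = 0 \<longrightarrow>
             hCG (log 2 (\<epsilon>^2) + 2) r 4 (Fmap 4 y) (F' u) (F' w) = berger \<epsilon> y u w)"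
proof (intro exI conjI allI impI)
  show "(Fmap 4 has_derivative Fd 4 y) (at y)" by (rule Fmap_deriv)
  fix u w :: "real^4" assume uy: "inner u y = 0" and wy: "inner w y = 0"
  have y': "y \<in> Sph (4/4)" using y by simp
  have x: "(sqrt 4 / 2) *\<^sub>R y = y" by simp
  have xx: "inner y y = 1" using sph_x[OF _ y'] by simp
  have xu: "inner y u = 0" and xw: "inner y w = 0" using uy wy by (simp_all add: inner_commute)
  have "2 powr (log 2 (\<epsilon>^2) + 2) = \<epsilon>^2 * 4" using e by (simp add: powr_add)
  then have pw: "(1/2::real) powr (log 2 (\<epsilon>^2) + 2) * (4/4) = 1 / (4 * \<epsilon>^2)"
    by (simp add: half_powr)
  have "hCG (log 2 (\<epsilon>^2) + 2) r 4 (Fmap 4 y) (Fd 4 y u) (Fd 4 y w) =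
     (1/4) * inner (dcol3 y u) (dcol3 y w) + ((1/2) powr (log 2 (\<epsilon>^2) + 2) * (4/4)) * inner (Yx y u) (Yx y w)"
    using hCG_F[OF _ y' uy wy, of "log 2 (\<epsilon>^2) + 2" r] x by simp
  also have "\<dots> = berger \<epsilon> y u w"
    unfolding pw A4[OF xx xu xw] A5[OF xx xu xw] berger_def using e by (simp add: field_simps power2_eq_square)
  finally show "hCG (log 2 (\<epsilon>^2) + 2) r 4 (Fmap 4 y) (Fd 4 y u) (Fd 4 y w) = berger \<epsilon> y u w" .
qed

lemma hemi_homeo:
  fixes f :: "'a::real_inner \<Rightarrow> 'b::t2_space"
  assumes S: "compact S" "\<And>y. y \<in> S \<Longrightarrow> - y \<in> S"
    and cont: "continuous_on S f"
    and eq: "\<And>y y'. y \<in> S \<Longrightarrow> y' \<in> S \<Longrightarrow> f y' = f y \<longleftrightarrow> y' = y \<or> y' = - y"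
    and WS: "W \<subseteq> f ` S" and Wz: "\<And>y. y \<in> S \<Longrightarrow> f y \<in> W \<longleftrightarrow> inner z y \<noteq> 0"
  shows "\<exists>g. homeomorphism (S \<inter> {y. inner z y > 0}) W f g"
proof -
  define U where "U = S \<inter> {y. inner z y > 0}"
  have contU: "continuous_on U f" using cont by (rule continuous_on_subset) (auto simp: U_def)
  have img: "f ` U = W"
  proof
    show "f ` U \<subseteq> W" using Wz by (auto simp: U_def)
    show "W \<subseteq> f ` U"
    proof
      fix w assume "w \<in> W"
      then obtain y where y: "y \<in> S" "w = f y" using WS by auto
      then have nz: "inner z y \<noteq> 0" using Wz \<open>w \<in> W\<close> by auto
      show "w \<in> f ` U"
      proof (cases "inner z y > 0")
        case True then show ?thesis using y by (auto simp: U_def)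
      next
        case False
        then have "inner z (-y) > 0" using nz by simp
        moreover have "f (-y) = f y" using eq[of y "-y"] y S(2) by auto
        ultimately show ?thesis using y S(2)[of y] unfolding U_def by (metis (mono_tags, lifting) IntI image_eqI mem_Collect_eq)
      qed
    qed
  qed
  have inj: "inj_on f U"
  proof (rule inj_onI)
    fix y y' assume "y \<in> U" "y' \<in> U" "f y = f y'"
    then have "y' = y \<or> y' = - y" using eq[of y y'] by (auto simp: U_def)
    moreover have "\<not> (y' = - y)" using \<open>y \<in> U\<close> \<open>y' \<in> U\<close> by (auto simp: U_def)
    ultimately show "y = y'" by auto
  qed
  have closed: "closedin (top_of_set W) (f ` C)" if C: "closedin (top_of_set U) C" for C
  proof -
    obtain C0 where C0: "closed C0" "C = U \<inter> C0" using C by (auto simp: closedin_closed)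
    define D where "D = (S \<inter> {y. inner z y \<ge> 0}) \<inter> C0"
    have "compact D" unfolding D_def using S(1) C0(1) by (intro compact_Int_closed closed_halfspace_ge)
    then have cD: "closed (f ` D)"
      by (intro compact_imp_closed compact_continuous_image continuous_on_subset[OF cont]) (auto simp: D_def)
    have "f ` C = W \<inter> f ` D"
    proof
      show "f ` C \<subseteq> W \<inter> f ` D" using Wz C0(2) by (auto simp: U_def D_def)
      show "W \<inter> f ` D \<subseteq> f ` C"
      proof
        fix w assume w: "w \<in> W \<inter> f ` D"
        then obtain y where y: "y \<in> D" "w = f y" by auto
        then have "inner z y \<noteq> 0" using Wz w by (auto simp: D_def)
        then have "y \<in> C" using y C0(2) by (auto simp: D_def U_def)
        then show "w \<in> f ` C" using y by auto
      qed
    qed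
    then show ?thesis using cD by (simp add: closedin_closed_Int)
  qed
  obtain g where "homeomorphism U W f g"
    using homeomorphism_injective_closed_map[OF contU img inj closed] by blast
  then show ?thesis unfolding U_def by blast
qed

lemma cover2:
  fixes f :: "'a::real_inner \<Rightarrow> 'b::t2_space"
  assumes S: "compact S" "\<And>y. y \<in> S \<Longrightarrow> - y \<in> S" "0 \<notin> S"
    and cont: "continuous_on S f" and img: "f ` S = T"
    and eq: "\<And>y y'. y \<in> S \<Longrightarrow> y' \<in> S \<Longrightarrow> f y' = f y \<longleftrightarrow> y' = y \<or> y' = - y"
  shows "covering_space S f T"
proof (rule covering_spaceI[OF cont img])
  fix q assume "q \<in> T"
  then obtain y0 where y0: "y0 \<in> S" "f y0 = q" using img by auto
  have y0z: "y0 \<noteq> 0" using y0 S(3) by auto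
  define K where "K = S \<inter> {y. inner y0 y = 0}"
  have "compact K" unfolding K_def using S(1) by (intro compact_Int_closed closed_hyperplane)
  then have cK: "closed (f ` K)"
    by (intro compact_imp_closed compact_continuous_image continuous_on_subset[OF cont]) (auto simp: K_def)
  define W where "W = T \<inter> - f ` K"
  have Wchar: "f y \<in> W \<longleftrightarrow> inner y0 y \<noteq> 0" if y: "y \<in> S" for y
  proof
    assume "f y \<in> W"
    then show "inner y0 y \<noteq> 0" using y by (auto simp: W_def K_def)
  next
    assume nz: "inner y0 y \<noteq> 0"
    have "f y \<notin> f ` K"
    proof
      assume "f y \<in> f ` K"
      then obtain k where k: "k \<in> K" "f y = f k" by auto
      then have "y = k \<or> y = - k" using eq[of k y] y by (auto simp: K_def)
      then show False using k nz by (auto simp: K_def)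
    qed
    then show "f y \<in> W" using y img by (auto simp: W_def)
  qed
  have Wchar': "f y \<in> W \<longleftrightarrow> inner (-y0) y \<noteq> 0" if y: "y \<in> S" for y
    using Wchar[OF y] by simp
  have qW: "q \<in> W" using Wchar[OF y0(1)] y0 y0z by simp
  have oW: "openin (top_of_set T) W" unfolding W_def using cK by (intro openin_open_Int) auto
  have WS: "W \<subseteq> f ` S" using img by (auto simp: W_def)
  define v where "v = {S \<inter> {y. inner y0 y > 0}, S \<inter> {y. inner (-y0) y > 0}}"
  have un: "\<Union>v = S \<inter> f -` W"
  proof
    show "\<Union>v \<subseteq> S \<inter> f -` W" using Wchar by (auto simp: v_def)
    show "S \<inter> f -` W \<subseteq> \<Union>v"
    proof
      fix y assume "y \<in> S \<inter> f -` W"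
      then have "y \<in> S" "inner y0 y \<noteq> 0" using Wchar by auto
      then show "y \<in> \<Union>v" by (auto simp: v_def)
    qed
  qed
  have op: "\<forall>u\<in>v. openin (top_of_set S) u"
    unfolding v_def by (auto intro!: openin_open_Int open_halfspace_gt open_halfspace_lt)
  have dj: "pairwise disjnt v"
    unfolding v_def pairwise_def disjnt_def by auto
  have hm: "\<forall>u\<in>v. \<exists>g. homeomorphism u W f g"
    unfolding v_def
    using hemi_homeo[OF S(1,2) cont eq WS Wchar] hemi_homeo[OF S(1,2) cont eq WS Wchar'] by blast
  show "\<exists>T'. q \<in> T' \<and> openin (top_of_set T) T' \<and>
         (\<exists>v. \<Union>v = S \<inter> f -` T' \<and> (\<forall>u\<in>v. openin (top_of_set S) u) \<and> pairwise disjnt v \<and>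
              (\<forall>u\<in>v. \<exists>q. homeomorphism u T' f q))"
    using qW oW un op dj hm by blast
qed

lemma col_inj_sq:
  assumes xx: "inner x x = (1::real)" and yy: "inner y y = 1" and e1: "col1 y = col1 x" and e3: "col3 y = col3 x"
  shows "(inner x y)^2 = 1"
proof -
  have h: "col1 y $ i = col1 x $ i" "col3 y $ i = col3 x $ i" for i using e1 e3 by simp_all
  note h1 = h(1)[of 1] h(1)[of 2] h(1)[of 3] h(2)[of 1] h(2)[of 2] h(2)[of 3]
  show ?thesis using xx yy h1 unfolding inner4 col1_c col3_c by simp algebra
qed

lemma col_inj:
  assumes xx: "inner x x = (1::real)" and yy: "inner y y = 1" and e1: "col1 y = col1 x" and e3: "col3 y = col3 x"
  shows "y = x \<or> y = - x"
proof -
  have "(inner x y)^2 = 1" by (rule col_inj_sq[OF assms])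
  then have "inner x y = 1 \<or> inner x y = -1" by (simp add: power2_eq_1_iff)
  then show ?thesis
  proof
    assume "inner x y = 1"
    then have "inner (y - x) (y - x) = 0" using xx yy by (simp add: inner_diff_left inner_diff_right inner_commute)
    then show ?thesis by simp
  next
    assume "inner x y = -1"
    then have "inner (y + x) (y + x) = 0" using xx yy by (simp add: inner_add_left inner_add_right inner_commute)
    then show ?thesis by (simp add: add_eq_0_iff)
  qed
qed

lemma col_neg: "col1 (- x) = col1 x" "col3 (- x) = col3 x"
  by (simp_all add: col1_c col3_c)

lemma Fmap_neg: "Fmap c (- y) = Fmap c y"
  by (simp add: Fmap_def Let_def col_neg[of "(sqrt c / 2) *\<^sub>R y", simplified])

lemma Fmap_eq:
  assumes c: "c > 0" and y: "y \<in> Sph (c/4)" and y': "y' \<in> Sph (c/4)"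
  shows "Fmap c y' = Fmap c y \<longleftrightarrow> y' = y \<or> y' = - y"
proof
  assume F: "Fmap c y' = Fmap c y"
  define s where "s = sqrt c / 2"
  have s0: "s \<noteq> 0" using c by (simp add: s_def)
  have "(1 / sqrt c) *\<^sub>R col3 (s *\<^sub>R y') = (1 / sqrt c) *\<^sub>R col3 (s *\<^sub>R y)" "col1 (s *\<^sub>R y') = col1 (s *\<^sub>R y)"
    using F by (simp_all add: Fmap_def Let_def s_def)
  then have e3: "col3 (s *\<^sub>R y') = col3 (s *\<^sub>R y)" and e1: "col1 (s *\<^sub>R y') = col1 (s *\<^sub>R y)"
    using c by simp_all
  have "s *\<^sub>R y' = s *\<^sub>R y \<or> s *\<^sub>R y' = - (s *\<^sub>R y)"
    using col_inj[OF sph_x[OF c y] sph_x[OF c y'] ] e1 e3 unfolding s_def by blast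
  then show "y' = y \<or> y' = - y" using s0
    by (metis scaleR_cancel_left scaleR_minus_right)
next
  assume "y' = y \<or> y' = - y"
  then show "Fmap c y' = Fmap c y" using Fmap_neg by auto
qed

lemma hopf_surj:
  fixes n :: "real^3"
  assumes nn: "inner n n = 1"
  shows "\<exists>x. inner x x = 1 \<and> col3 x = n"
proof -
  have nn': "(n$1)^2 + (n$2)^2 + (n$3)^2 = 1" using nn by (simp add: inner3 power2_eq_square)
  show ?thesis
  proof (cases "n$3 = -1")
    case True
    then have "(n$1)^2 + (n$2)^2 = 0" using nn' by simp
    then have "n$1 = 0" "n$2 = 0" by (simp_all add: sum_power2_eq_zero_iff)
    then have "col3 (vector [0,0,1,0]) = n" using True by (simp add: col3_c vec_eq_iff forall_3)
    moreover have "inner (vector [0,0,1,0]::real^4) (vector [0,0,1,0]) = 1" by (simp add: inner4)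
    ultimately show ?thesis by blast
  next
    case False
    have "0 \<le> (n$1)^2 + (n$2)^2" by simp
    then have "(n$3)^2 \<le> 1" using nn' by linarith
    then have "\<bar>n$3\<bar> \<le> 1" by (simp add: abs_square_le_1)
    then have "n$3 \<ge> -1" by linarith
    with False have n3: "1 + n$3 > 0" by simp
    define a where "a = sqrt ((1 + n$3) / 2)"
    have a0: "a > 0" using n3 by (simp add: a_def)
    have aa: "a * a = (1 + n$3) / 2" using n3 by (simp add: a_def)
    have n12: "(n$1)^2 + (n$2)^2 = (1 - n$3) * (2 * (a * a))" using nn' aa by (simp add: algebra_simps power2_eq_square)
    define x where "x = (vector [a, 0, n$1 / (2*a), - n$2 / (2*a)] :: real^4)"
    have q: "((n$1)^2 + (n$2)^2) / (4 * (a * a)) = (1 - n$3) / 2"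
      unfolding n12 using a0 by simp
    have sq: "(z / (2*a)) * (z / (2*a)) = z^2 / (4 * (a * a))" for z by (simp add: power2_eq_square)
    have "inner x x = a * a + ((n$1)^2/ (4 * (a * a)) + (n$2)^2 / (4 * (a * a)))"
      by (simp add: x_def inner4 sq power2_eq_square)
    also have "\<dots> = 1" unfolding add_divide_distrib[symmetric] q unfolding aa by (simp add: field_simps)
    finally have xx: "inner x x = 1" .
    have c3: "(a)^2 - (n$1 / (2*a))^2 - (n$2 / (2*a))^2 = n$3"
    proof -
      have "(a)^2 - (n$1 / (2*a))^2 - (n$2 / (2*a))^2 = a * a - ((n$1)^2/ (4 * (a * a)) + (n$2)^2 / (4 * (a * a)))"
        by (simp add: power2_eq_square[of "n$1"] power2_eq_square[of "n$2"] power2_eq_square[of a] power2_eq_square[of "_/_"])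
      also have "\<dots> = n$3" unfolding add_divide_distrib[symmetric] q unfolding aa by (simp add: field_simps)
      finally show ?thesis .
    qed
    have "col3 x = n"
      unfolding vec_eq_iff forall_3 col3_c x_def using a0 c3 by simp
    then show ?thesis using xx by blast
  qed
qed

definition rot :: "real \<Rightarrow> real^4 \<Rightarrow> real^4" where
  "rot t x = vector [x$1 * cos t - x$2 * sin t, x$1 * sin t + x$2 * cos t, x$3 * cos t - x$4 * sin t, x$3 * sin t + x$4 * cos t]"

lemma rot_props:
  "inner (rot t x) (rot t x) = inner x x"
  "col3 (rot t x) = col3 x"
  "col1 (rot t x) = ((cos t)^2 - (sin t)^2) *\<^sub>R col1 x + (2 * sin t * cos t) *\<^sub>R col2 x"
proof -
  have sc: "(sin t)^2 + (cos t)^2 = 1" by simp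
  show "inner (rot t x) (rot t x) = inner x x"
    unfolding rot_def inner4 vector_4 using sc by algebra
  show "col3 (rot t x) = col3 x"
    unfolding vec_eq_iff forall_3 rot_def col3_c vector_4 vector_3 using sc by algebra
  show "col1 (rot t x) = ((cos t)^2 - (sin t)^2) *\<^sub>R col1 x + (2 * sin t * cos t) *\<^sub>R col2 x"
    unfolding vec_eq_iff forall_3 rot_def col1_c col2_def by simp algebra
qed

lemma parseval3:
  assumes xx: "inner x x = (1::real)"
  shows "v = inner v (col1 x) *\<^sub>R col1 x + inner v (col2 x) *\<^sub>R col2 x + inner v (col3 x) *\<^sub>R col3 x"
    and "inner v v = (inner v (col1 x))^2 + (inner v (col2 x))^2 + (inner v (col3 x))^2"
proof -
  show "v = inner v (col1 x) *\<^sub>R col1 x + inner v (col2 x) *\<^sub>R col2 x + inner v (col3 x) *\<^sub>R col3 x"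
    unfolding vec_eq_iff forall_3 using xx unfolding inner3 inner4 col1_c col2_def col3_c by simp algebra
  show "inner v v = (inner v (col1 x))^2 + (inner v (col2 x))^2 + (inner v (col3 x))^2"
    using xx unfolding inner3 inner4 col1_c col2_def col3_c by simp algebra
qed

lemma Fmap_image:
  assumes c: "c > 0"
  shows "Fmap c ` Sph (c/4) = UT c"
proof
  have sc: "sqrt c > 0" using c by simp
  show "Fmap c ` Sph (c/4) \<subseteq> UT c"
  proof
    fix q assume "q \<in> Fmap c ` Sph (c/4)"
    then obtain y where y: "y \<in> Sph (c/4)" "q = Fmap c y" by auto
    define x where "x = (sqrt c / 2) *\<^sub>R y"
    have xx: "inner x x = 1" unfolding x_def by (rule sph_x[OF c y(1)])
    have n1: "norm (col1 x) = 1" and n3: "norm (col3 x) = 1" using A8[OF xx] by (simp_all add: norm_eq_1_inner)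
    have "q = ((1 / sqrt c) *\<^sub>R col3 x, col1 x)" by (simp add: y(2) Fmap_def x_def Let_def)
    then show "q \<in> UT c" unfolding UT_def using n1 n3 sc A7[of x] by (simp add: inner_commute)
  qed
  show "UT c \<subseteq> Fmap c ` Sph (c/4)"
  proof
    fix q assume "q \<in> UT c"
    then obtain p v where q: "q = (p, v)" and p: "norm p = 1 / sqrt c" and v: "norm v = 1" and pv: "inner p v = 0"
      unfolding UT_def by auto
    define n where "n = sqrt c *\<^sub>R p"
    have "norm n = 1" using p sc by (simp add: n_def)
    then have nn: "inner n n = 1" by (simp add: norm_eq_1_inner)
    obtain x0 where x0: "inner x0 x0 = 1" "col3 x0 = n" using hopf_surj[OF nn] by blast
    define \<alpha> where "\<alpha> = inner v (col1 x0)"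
    define \<beta> where "\<beta> = inner v (col2 x0)"
    have v3: "inner v (col3 x0) = 0" using pv by (simp add: x0(2) n_def inner_commute)
    have vv: "inner v v = 1" using v by (simp add: norm_eq_1_inner)
    have ab: "\<alpha>^2 + \<beta>^2 = 1" using parseval3(2)[OF x0(1), of v] v3 vv by (simp add: \<alpha>_def \<beta>_def)
    have vab: "v = \<alpha> *\<^sub>R col1 x0 + \<beta> *\<^sub>R col2 x0" using parseval3(1)[OF x0(1), of v] v3 by (simp add: \<alpha>_def \<beta>_def)
    obtain \<phi> where phi: "\<alpha> = cos \<phi>" "\<beta> = sin \<phi>" using sincos_total_2pi[OF ab] by metis
    define x where "x = rot (\<phi>/2) x0"
    have cd: "(cos (\<phi>/2))^2 - (sin (\<phi>/2))^2 = cos \<phi>" "2 * sin (\<phi>/2) * cos (\<phi>/2) = sin \<phi>"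
      using cos_double[of "\<phi>/2"] sin_double[of "\<phi>/2"] by simp_all
    have xx: "inner x x = 1" using x0(1) by (simp add: x_def rot_props)
    have x3: "col3 x = n" using x0(2) by (simp add: x_def rot_props)
    have x1: "col1 x = v" using vab phi cd by (simp add: x_def rot_props)
    define y where "y = (2 / sqrt c) *\<^sub>R x"
    have xy: "(sqrt c / 2) *\<^sub>R y = x" using sc by (simp add: y_def)
    have "norm x = 1" using xx by (simp add: norm_eq_1_inner)
    then have "norm y = 1 / sqrt (c/4)" using sc by (simp add: y_def real_sqrt_divide)
    then have yS: "y \<in> Sph (c/4)" by (simp add: Sph_iff)
    have "Fmap c y = ((1 / sqrt c) *\<^sub>R col3 x, col1 x)" unfolding Fmap_def Let_def xy ..
    also have "\<dots> = q" using x1 x3 sc by (simp add: n_def q)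
    finally show "q \<in> Fmap c ` Sph (c/4)" using yS by (metis image_eqI)
  qed
qed

theorem theorem1:
  fixes c :: real
  assumes "c > 0"
  shows "covering_space (Sph (c/4) :: (real^4) set) (Fmap c) (UT c)
    \<and> (\<forall>y \<in> Sph (c/4). Fmap c (- y) = Fmap c y)
    \<and> (\<forall>y \<in> Sph (c/4). \<forall>y' \<in> Sph (c/4). Fmap c y' = Fmap c y \<longleftrightarrow> y' = y \<or> y' = - y)
    \<and> (\<forall>r \<ge> 0. \<forall>y \<in> Sph (c/4). \<exists>F'. (Fmap c has_derivative F') (at y) \<and>
          (\<forall>u w. inner u y = 0 \<longrightarrow> inner w y = 0 \<longrightarrow>
             hCG (log 2 c) r c (Fmap c y) (F' u) (F' w) = inner u w))
    \<and> (\<forall>\<epsilon> > 0. \<forall>r \<ge> 0. \<forall>y \<in> (Sph 1 :: (real^4) set). \<exists>F'. (Fmap 4 has_derivative F') (at y) \<and>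
          (\<forall>u w. inner u y = 0 \<longrightarrow> inner w y = 0 \<longrightarrow>
             hCG (log 2 (\<epsilon>^2) + 2) r 4 (Fmap 4 y) (F' u) (F' w) = berger \<epsilon> y u w))"
proof (intro conjI ballI allI impI)
  have c: "c > 0" by (rule assms)
  show "covering_space (Sph (c/4) :: (real^4) set) (Fmap c) (UT c)"
  proof (rule cover2)
    show "compact (Sph (c/4) :: (real^4) set)" by (simp add: Sph_def)
    show "- y \<in> Sph (c/4)" if "y \<in> Sph (c/4)" for y :: "real^4" using that by (simp add: Sph_iff)
    show "(0::real^4) \<notin> Sph (c/4)" using c by (simp add: Sph_iff)
    show "continuous_on (Sph (c/4)) (Fmap c)"
      by (intro continuous_at_imp_continuous_on ballI has_derivative_continuous[OF Fmap_deriv])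
    show "Fmap c ` Sph (c/4) = UT c" by (rule Fmap_image[OF c])
    show "Fmap c y' = Fmap c y \<longleftrightarrow> y' = y \<or> y' = - y" if "y \<in> Sph (c/4)" "y' \<in> Sph (c/4)" for y y' :: "real^4"
      by (rule Fmap_eq[OF c that])
  qed
  show "Fmap c (- y) = Fmap c y" for y by (rule Fmap_neg)
  show "Fmap c y' = Fmap c y \<longleftrightarrow> y' = y \<or> y' = - y" if "y \<in> Sph (c/4)" "y' \<in> Sph (c/4)" for y y' :: "real^4"
    by (rule Fmap_eq[OF c that])
  show "\<exists>F'. (Fmap c has_derivative F') (at y) \<and>
          (\<forall>u w. inner u y = 0 \<longrightarrow> inner w y = 0 \<longrightarrow>
             hCG (log 2 c) r c (Fmap c y) (F' u) (F' w) = inner u w)" if "y \<in> Sph (c/4)" for r y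
    by (rule part1[OF c that])
  show "\<exists>F'. (Fmap 4 has_derivative F') (at y) \<and>
          (\<forall>u w. inner u y = 0 \<longrightarrow> inner w y = 0 \<longrightarrow>
             hCG (log 2 (\<epsilon>^2) + 2) r 4 (Fmap 4 y) (F' u) (F' w) = berger \<epsilon> y u w)"
    if "\<epsilon> > 0" "y \<in> (Sph 1 :: (real^4) set)" for \<epsilon> r y
    by (rule part2[OF that])
qed
end
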